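(* Let $k\ge2$, $1\le\nu\le k-1$, $d\ge2$, $\delta\in\mathbb{C}^*$, and let \[ S(z_1,\dots,z_k)=\big(z_2,\dots,z_k,\ \delta(z_{k-\nu+1}^d-z_1)\big) \] be the shift-like automorphism of $\mathbb{C}^k$ of type $\nu$ and degree $d$, with positive Green's function \[ G^+(z)=\lim_{n\to\infty}\frac1{d^n}\log^+\|S^{\nu n}(z)\|. \] For $R>0$ and $1\le i\le k$ let $V_i=\{z\in\mathbb{C}^k:\|z\|_\infty=|z_i|\ge R\}$, $V_R=\overline{\Delta^k(0;R)}$, $V_R^+=\bigcup_{i=k-\nu+1}^kV_i$ and $V_R^-=\bigcup_{i=1}^{k-\nu}V_i$. Then for every $c>0$ there exists $R>0$ such that $G^+(z)\ge c$ for every $z\in V_R^+$; i.e. $\{z\in\mathbb{C}^k:G^+(z)<c\}\subset V_R\cup V_R^-$.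
   Context: $\|z\|_\infty=\max_i|z_i|$, $\log^+t=\max(\log t,0)$, $S^m$ is the $m$-th iterate of $S$, and $\Delta^k(0;R)$ is the polydisc of polyradius $(R,\dots,R)$ centered at $0$. *)

theory Defs
  imports "HOL-Analysis.Analysis"
begin

text \<open>Points of C^k are represented as functions nat => complex with coordinates
  indexed by 1..k and vanishing outside this range.\<close>

definition cvec :: "nat \<Rightarrow> (nat \<Rightarrow> complex) set" where
  "cvec k = {z. \<forall>i. i \<notin> {1..k} \<longrightarrow> z i = 0}"

definition supnorm :: "nat \<Rightarrow> (nat \<Rightarrow> complex) \<Rightarrow> real" where
  "supnorm k z = Max ((\<lambda>i. cmod (z i)) ` {1..k})"

definition logplus :: "real \<Rightarrow> real" where
  "logplus t = max (ln t) 0"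

definition shift_like :: "nat \<Rightarrow> nat \<Rightarrow> nat \<Rightarrow> complex \<Rightarrow> (nat \<Rightarrow> complex) \<Rightarrow> (nat \<Rightarrow> complex)" where
  "shift_like k \<nu> d \<delta> z = (\<lambda>i. if 1 \<le> i \<and> i < k then z (i + 1)
                              else if i = k then \<delta> * (z (k - \<nu> + 1) ^ d - z 1)
                              else 0)"

definition green_plus :: "nat \<Rightarrow> nat \<Rightarrow> nat \<Rightarrow> complex \<Rightarrow> (nat \<Rightarrow> complex) \<Rightarrow> real" where
  "green_plus k \<nu> d \<delta> z =
     lim (\<lambda>n. logplus (supnorm k (((shift_like k \<nu> d \<delta>) ^^ (\<nu> * n)) z)) / real d ^ n)"

definition V_i :: "nat \<Rightarrow> real \<Rightarrow> nat \<Rightarrow> (nat \<Rightarrow> complex) set" where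
  "V_i k R i = {z \<in> cvec k. supnorm k z = cmod (z i) \<and> cmod (z i) \<ge> R}"

definition V_plus :: "nat \<Rightarrow> nat \<Rightarrow> real \<Rightarrow> (nat \<Rightarrow> complex) set" where
  "V_plus k \<nu> R = (\<Union>i\<in>{k - \<nu> + 1..k}. V_i k R i)"

end

theory Submission imports Defs begin

lemma shift_app: "shift_like k \<nu> d \<delta> v i = (if 1 \<le> i \<and> i < k then v (i + 1)
                              else if i = k then \<delta> * (v (k - \<nu> + 1) ^ d - v 1)
                              else 0)"
  by (simp add: shift_like_def)

lemma shift_pow:
  assumes "m \<le> \<nu>" "\<nu> \<le> k - 1" "1 \<le> \<nu>" "w \<in> cvec k"
  shows "(shift_like k \<nu> d \<delta> ^^ m) w i =
    (if 1 \<le> i \<and> i + m \<le> k then w (i+m)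
     else if k < i + m \<and> i \<le> k then \<delta> * (w (i+m-\<nu>)^d - w (i+m-k)) else 0)"
  using assms(1,4)
proof (induction m arbitrary: i)
  case 0
  then show ?case by (auto simp: cvec_def)
next
  case (Suc m)
  have IH: "\<And>j. (shift_like k \<nu> d \<delta> ^^ m) w j =
    (if 1 \<le> j \<and> j + m \<le> k then w (j+m)
     else if k < j + m \<and> j \<le> k then \<delta> * (w (j+m-\<nu>)^d - w (j+m-k)) else 0)"
    using Suc by auto
  have "(shift_like k \<nu> d \<delta> ^^ Suc m) w i = shift_like k \<nu> d \<delta> ((shift_like k \<nu> d \<delta> ^^ m) w) i"
    by simp
  also have "\<dots> = (if 1 \<le> i \<and> i + Suc m \<le> k then w (i+Suc m)
     else if k < i + Suc m \<and> i \<le> k then \<delta> * (w (i+Suc m-\<nu>)^d - w (i+Suc m-k)) else 0)"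
    unfolding shift_app IH
    using Suc.prems assms(2,3)
    by (auto simp: algebra_simps Suc_diff_le)
  finally show ?case .
qed

lemma supnorm_ge: "i \<in> {1..k} \<Longrightarrow> cmod (z i) \<le> supnorm k z"
  unfolding supnorm_def by (rule Max_ge) auto

lemma supnorm_le: "1 \<le> k \<Longrightarrow> (\<And>i. i \<in> {1..k} \<Longrightarrow> cmod (z i) \<le> M) \<Longrightarrow> supnorm k z \<le> M"
  unfolding supnorm_def by (subst Max_le_iff) auto

lemma supnorm_att: "1 \<le> k \<Longrightarrow> \<exists>i\<in>{1..k}. cmod (z i) = supnorm k z"
proof -
  assume "1 \<le> k"
  then have "supnorm k z \<in> (\<lambda>i. cmod (z i)) ` {1..k}"
    unfolding supnorm_def by (intro Max_in) auto
  then show ?thesis by auto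
qed

lemma step:
  assumes k: "k \<ge> 2" and nu: "1 \<le> \<nu>" "\<nu> \<le> k - 1" and d: "d \<ge> 2" and dl: "\<delta> \<noteq> 0"
    and R: "R \<ge> 2" "R \<ge> 2 / cmod \<delta>"
    and w: "w \<in> cvec k" "supnorm k w \<ge> R" "i0 \<in> {k-\<nu>+1..k}" "cmod (w i0) = supnorm k w"
  defines "w' \<equiv> (shift_like k \<nu> d \<delta> ^^ \<nu>) w"
  shows "w' \<in> cvec k \<and> supnorm k w' \<ge> R \<and> (\<exists>i\<in>{k-\<nu>+1..k}. cmod (w' i) = supnorm k w')
     \<and> cmod \<delta> / 2 * supnorm k w ^ d \<le> supnorm k w' \<and> supnorm k w' \<le> (2*cmod \<delta> + 1) * supnorm k w ^ d"
proof -
  define N where "N = supnorm k w"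
  have N2: "N \<ge> 2" and NR: "N \<ge> R" using R w by (auto simp: N_def)
  have form: "\<And>i. w' i = (if 1 \<le> i \<and> i + \<nu> \<le> k then w (i+\<nu>)
     else if k < i + \<nu> \<and> i \<le> k then \<delta> * (w (i+\<nu>-\<nu>)^d - w (i+\<nu>-k)) else 0)"
    unfolding w'_def using nu w by (intro shift_pow) auto
  have wle: "\<And>j. j \<in> {1..k} \<Longrightarrow> cmod (w j) \<le> N" unfolding N_def by (rule supnorm_ge)
  have cv: "w' \<in> cvec k" unfolding cvec_def using nu by (auto simp: form)
  have Nd: "N ^ 2 \<le> N ^ d" using N2 d by (intro power_increasing) auto
  have NN: "2 * N \<le> N ^ 2" using N2 by (simp add: power2_eq_square)
  have Nle: "N \<le> N ^ d" using Nd NN N2 by linarith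
  have pos: "cmod \<delta> > 0" using dl by simp
  have i0top: "k < i0 + \<nu>" "i0 \<le> k" "\<not> (i0 + \<nu> \<le> k)" using w(3) nu by auto
  have w'i0: "w' i0 = \<delta> * (w i0 ^ d - w (i0+\<nu>-k))" using form[of i0] i0top by simp
  have jin: "i0 + \<nu> - k \<in> {1..k}" using i0top nu by auto
  have "cmod (w i0 ^ d) - cmod (w (i0+\<nu>-k)) \<le> cmod (w i0 ^ d - w (i0+\<nu>-k))"
    by (rule norm_triangle_ineq2)
  moreover have "cmod (w i0 ^ d) = N ^ d" using w(4) by (simp add: norm_power N_def)
  moreover have "cmod (w (i0+\<nu>-k)) \<le> N" using wle[OF jin] .
  ultimately have "N ^ d - N \<le> cmod (w i0 ^ d - w (i0+\<nu>-k))" by linarith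
  then have "cmod \<delta> * (N ^ d - N) \<le> cmod (w' i0)" using pos
    by (simp add: w'i0 norm_mult)
  moreover have "cmod \<delta> / 2 * N ^ d \<le> cmod \<delta> * (N ^ d - N)"
    using pos Nd NN by (simp add: field_simps)
  ultimately have low: "cmod \<delta> / 2 * N ^ d \<le> cmod (w' i0)" by linarith
  have "N \<le> cmod \<delta> / 2 * N * N"
  proof -
    have "R * cmod \<delta> \<le> N * cmod \<delta>" using NR pos by (intro mult_right_mono) auto
    moreover have "2 \<le> R * cmod \<delta>" using R(2) pos by (simp add: field_simps)
    ultimately have "2 \<le> N * cmod \<delta>" by linarith
    then have "1 \<le> cmod \<delta> / 2 * N" by (simp add: field_simps)
    then have "N * 1 \<le> N * (cmod \<delta> / 2 * N)" using N2 by (intro mult_left_mono) auto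
    then show ?thesis by (simp add: algebra_simps)
  qed
  also have "\<dots> \<le> cmod \<delta> / 2 * N ^ d" using Nd pos by (simp add: power2_eq_square)
  finally have NX: "N \<le> cmod \<delta> / 2 * N ^ d" .
  have i0in: "i0 \<in> {1..k}" using w(3) by auto
  have sw'ge: "cmod (w' i0) \<le> supnorm k w'" by (rule supnorm_ge[OF i0in])
  have upper: "supnorm k w' \<le> (2*cmod \<delta> + 1) * N ^ d"
  proof (rule supnorm_le)
    show "1 \<le> k" using k by simp
    fix i assume i: "i \<in> {1..k}"
    show "cmod (w' i) \<le> (2*cmod \<delta> + 1) * N ^ d"
    proof (cases "i + \<nu> \<le> k")
      case True
      then have "cmod (w' i) = cmod (w (i+\<nu>))" using form[of i] i by simp
      also have "\<dots> \<le> N" using True i by (intro wle) auto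
      moreover have "1 * N ^ d \<le> (2*cmod \<delta> + 1) * N ^ d" using pos N2 by (intro mult_right_mono) auto
      ultimately show ?thesis using Nle by linarith
    next
      case False
      then have e: "w' i = \<delta> * (w i ^ d - w (i+\<nu>-k))" using form[of i] i by simp
      have "cmod (w i ^ d - w (i+\<nu>-k)) \<le> cmod (w i ^ d) + cmod (w (i+\<nu>-k))"
        by (rule norm_triangle_ineq4)
      also have "\<dots> \<le> N ^ d + N"
      proof (rule add_mono)
        show "cmod (w i ^ d) \<le> N ^ d" unfolding norm_power using wle[OF i] by (intro power_mono) auto
        have "i+\<nu>-k \<in> {1..k}" using False i nu by auto
        then show "cmod (w (i+\<nu>-k)) \<le> N" by (rule wle)
      qed
      finally have "cmod (w' i) \<le> cmod \<delta> * (N ^ d + N)" using pos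
        by (simp add: e norm_mult)
      also have "\<dots> \<le> cmod \<delta> * (2 * N ^ d)" using Nle pos by simp
      moreover have "cmod \<delta> * (2 * N ^ d) + N ^ d = (2*cmod \<delta> + 1) * N ^ d" by (simp add: algebra_simps)
      moreover have "0 \<le> N ^ d" using N2 by simp
      ultimately show ?thesis by linarith
    qed
  qed
  obtain i1 where i1: "i1 \<in> {1..k}" "cmod (w' i1) = supnorm k w'" using supnorm_att[of k w'] k by auto
  have att: "\<exists>i\<in>{k-\<nu>+1..k}. cmod (w' i) = supnorm k w'"
  proof (cases "i1 + \<nu> \<le> k")
    case True
    then have "cmod (w' i1) = cmod (w (i1+\<nu>))" using form[of i1] i1 by simp
    also have "\<dots> \<le> N" using True i1 by (intro wle) auto
    finally have "supnorm k w' \<le> cmod (w' i0)" using i1 NX low by linarith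
    then show ?thesis using sw'ge w(3) by (intro bexI[of _ i0]) auto
  next
    case False
    then show ?thesis using i1 by (intro bexI[of _ i1]) auto
  qed
  show ?thesis using cv att upper low sw'ge NX NR by (auto simp: N_def)
qed


theorem proposition4p3:
  fixes k \<nu> d :: nat and \<delta> :: complex and c :: real
  assumes "k \<ge> 2" and "1 \<le> \<nu>" and "\<nu> \<le> k - 1" and "d \<ge> 2" and "\<delta> \<noteq> 0"
    and "c > 0"
  shows "\<exists>R>0. \<forall>z\<in>V_plus k \<nu> R. green_plus k \<nu> d \<delta> z \<ge> c"
proof -
  note as = assms
  define A where "A = cmod \<delta> / 2"
  define B where "B = 2 * cmod \<delta> + 1"
  define D where "D = real d"
  define \<alpha> where "\<alpha> = ln A / (D - 1)"
  define \<beta> where "\<beta> = ln B / (D - 1)"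
  define R where "R = max (max 2 (2 / cmod \<delta>)) (exp (c - \<alpha>))"
  have pos: "cmod \<delta> > 0" using as by simp
  have A0: "A > 0" using pos by (simp add: A_def)
  have AB: "A \<le> B" using pos by (simp add: A_def B_def)
  have D2: "D \<ge> 2" using as by (simp add: D_def)
  have Dal: "D * \<alpha> = ln A + \<alpha>" using D2 by (simp add: \<alpha>_def field_simps)
  have Dbe: "D * \<beta> = ln B + \<beta>" using D2 by (simp add: \<beta>_def field_simps)
  have albe: "\<alpha> \<le> \<beta>" unfolding \<alpha>_def \<beta>_def using D2 A0 AB
    by (intro divide_right_mono) auto
  have R2: "R \<ge> 2" "R \<ge> 2 / cmod \<delta>" "R \<ge> exp (c - \<alpha>)" by (auto simp: R_def)
  show ?thesis
  proof (intro exI[of _ R] conjI ballI)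
    show "R > 0" using R2 by linarith
    fix z assume "z \<in> V_plus k \<nu> R"
    then obtain i0 where i0: "i0 \<in> {k-\<nu>+1..k}" "z \<in> cvec k" "supnorm k z = cmod (z i0)" "cmod (z i0) \<ge> R"
      by (auto simp: V_plus_def V_i_def)
    define S where "S = shift_like k \<nu> d \<delta>"
    define s where "s n = (S ^^ (\<nu> * n)) z" for n
    have sS: "s (Suc n) = (S ^^ \<nu>) (s n)" for n
      by (simp add: s_def funpow_add)
    have inv: "s n \<in> cvec k \<and> supnorm k (s n) \<ge> R \<and> (\<exists>i\<in>{k-\<nu>+1..k}. cmod (s n i) = supnorm k (s n))" for n
    proof (induction n)
      case 0
      then show ?case using i0 by (auto simp: s_def)
    next
      case (Suc n)
      then obtain i where "s n \<in> cvec k" "supnorm k (s n) \<ge> R" "i \<in> {k-\<nu>+1..k}" "cmod (s n i) = supnorm k (s n)"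
        by blast
      from step[OF as(1-5) R2(1,2) this] show ?case unfolding sS S_def by blast
    qed
    define \<rho> where "\<rho> n = supnorm k (s n)" for n
    have rhoR: "\<rho> n \<ge> R" for n using inv[of n] by (simp add: \<rho>_def)
    have rho0: "\<rho> n > 0" for n using rhoR[of n] R2 by linarith
    have bnd: "A * \<rho> n ^ d \<le> \<rho> (Suc n) \<and> \<rho> (Suc n) \<le> B * \<rho> n ^ d" for n
    proof -
      from inv[of n] obtain i where "s n \<in> cvec k" "supnorm k (s n) \<ge> R" "i \<in> {k-\<nu>+1..k}" "cmod (s n i) = supnorm k (s n)"
        by blast
      from step[OF as(1-5) R2(1,2) this] show ?thesis unfolding \<rho>_def sS S_def A_def B_def by blast
    qed
    define L where "L n = ln (\<rho> n)" for n
    have lnlow: "ln A + D * L n \<le> L (Suc n)" for n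
    proof -
      have "ln (A * \<rho> n ^ d) \<le> ln (\<rho> (Suc n))"
        using bnd[of n] A0 rho0[of n] rho0[of "Suc n"] by (subst ln_le_cancel_iff) auto
      then show ?thesis using A0 rho0[of n] by (simp add: L_def ln_mult ln_realpow D_def)
    qed
    have lnup: "L (Suc n) \<le> ln B + D * L n" for n
    proof -
      have B0: "B > 0" using A0 AB by linarith
      have "ln (\<rho> (Suc n)) \<le> ln (B * \<rho> n ^ d)"
        using bnd[of n] B0 rho0 by (subst ln_le_cancel_iff) auto
      then show ?thesis using B0 rho0[of n] by (simp add: L_def ln_mult ln_realpow D_def)
    qed
    define b where "b n = (L n + \<alpha>) / D ^ n" for n
    define cc where "cc n = (L n + \<beta>) / D ^ n" for n
    have Dp: "D ^ n > 0" for n using D2 by simp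
    have binc: "incseq b"
    proof (rule incseq_SucI)
      fix n
      have "D * (L n + \<alpha>) \<le> L (Suc n) + \<alpha>" using lnlow[of n] Dal by (simp add: algebra_simps)
      then have "D * (L n + \<alpha>) / D ^ Suc n \<le> (L (Suc n) + \<alpha>) / D ^ Suc n"
        using Dp[of "Suc n"] by (intro divide_right_mono) auto
      moreover have "D * (L n + \<alpha>) / D ^ Suc n = b n" using D2 by (simp add: b_def)
      ultimately show "b n \<le> b (Suc n)" by (simp add: b_def)
    qed
    have cdec: "decseq cc"
    proof (rule decseq_SucI)
      fix n
      have "L (Suc n) + \<beta> \<le> D * (L n + \<beta>)" using lnup[of n] Dbe by (simp add: algebra_simps)
      then have "(L (Suc n) + \<beta>) / D ^ Suc n \<le> D * (L n + \<beta>) / D ^ Suc n"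
        using Dp[of "Suc n"] by (intro divide_right_mono) auto
      moreover have "D * (L n + \<beta>) / D ^ Suc n = cc n" using D2 by (simp add: cc_def)
      ultimately show "cc (Suc n) \<le> cc n" by (simp add: cc_def)
    qed
    have bc: "b n \<le> cc n" for n
      unfolding b_def cc_def using albe Dp[of n] by (intro divide_right_mono) auto
    have bdd: "bdd_above (range b)"
    proof (rule bdd_aboveI2)
      fix n show "b n \<le> cc 0" using bc[of n] cdec[THEN decseqD, of 0 n] by simp
    qed
    have blim: "b \<longlonglongrightarrow> (SUP i. b i)" by (rule LIMSEQ_incseq_SUP[OF bdd binc])
    have a_eq: "(\<lambda>n. logplus (supnorm k (((shift_like k \<nu> d \<delta>) ^^ (\<nu> * n)) z)) / real d ^ n)
        = (\<lambda>n. b n - \<alpha> / D ^ n)"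
    proof
      fix n
      have "L n \<ge> 0" using rhoR[of n] R2 by (simp add: L_def)
      then have "logplus (\<rho> n) = L n" by (simp add: logplus_def L_def)
      then show "logplus (supnorm k (((shift_like k \<nu> d \<delta>) ^^ (\<nu> * n)) z)) / real d ^ n = b n - \<alpha> / D ^ n"
        unfolding b_def by (simp add: \<rho>_def s_def S_def D_def diff_divide_distrib add_divide_distrib)
    qed
    have "(\<lambda>n. b n - \<alpha> / D ^ n) \<longlonglongrightarrow> (SUP i. b i) - 0"
      using D2 by (intro tendsto_diff blim LIMSEQ_divide_realpow_zero) auto
    then have g: "green_plus k \<nu> d \<delta> z = (SUP i. b i)"
      unfolding green_plus_def a_eq by (simp add: limI)
    have "b 0 \<le> (SUP i. b i)" by (rule cSUP_upper[OF _ bdd]) auto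
    moreover have "c \<le> b 0"
    proof -
      have "ln (exp (c - \<alpha>)) \<le> ln R" using R2 by (subst ln_le_cancel_iff) auto
      moreover have "ln R \<le> L 0" using rhoR[of 0] R2 by (simp add: L_def)
      ultimately show ?thesis by (simp add: b_def)
    qed
    ultimately show "c \<le> green_plus k \<nu> d \<delta> z" using g by simp
  qed
qed

end
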